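(* Let $k$ be a commutative ring, $P$ an invertible $k$-module, $Q=P^*$, and $A$ a $P$-Frobenius $k$-algebra with Frobenius system $(\psi,x_i,q_i,y_i)$ such that $u=\sum_iq_i\otimes y_ix_i\in Q\otimes_kA$ is Morita-invertible. Then $A$ is strongly separable.
   Context: $A$ is $P$-Frobenius if it is finitely generated projective over $k$ and $A_A\cong\mathrm{Hom}_k(A,P)_A$, where $(\psi a)(x)=\psi(ax)$. A Frobenius system consists of $\psi\in\mathrm{Hom}_k(A,P)$ such that $a\mapsto\psi a$ is an isomorphism $A\to\mathrm{Hom}_k(A,P)$, and finitely many $x_i,y_i\in A$, $q_i\in Q$ with $\sum_ix_i\,q_i(\psi(y_ia))=a$ and $\sum_iq_i(\psi(ax_i))\,y_i=a$ for all $a\in A$. An element $\sum_iq_i\otimes a_i\in Q\otimes A$ is Morita-invertible if there is $\sum_jp_j\otimes b_j\in P\otimes A$ with $\sum_{i,j}q_i(p_j)a_ib_j=1_A$. $A$ is strongly separable (Kanzaki) if there is $e=\sum_jz_j\otimes w_j\in A\otimes A$ with $\sum_jz_jw_j=1_A$ and $\sum_jz_ja\otimes w_j=\sum_jz_j\otimes aw_j$ for all $a\in A$. *)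

theory Defs
  imports Complex_Main
begin

text \<open>Modules over a commutative ring k are types with an ab_group_add structure and a
scalar action satisfying the locale module from HOL.Modules.\<close>

definition algebra_over :: "('k::comm_ring_1 \<Rightarrow> 'a::ring_1 \<Rightarrow> 'a) \<Rightarrow> bool" where
  "algebra_over sA \<longleftrightarrow> Modules.module sA \<and>
     (\<forall>c a b. sA c (a * b) = sA c a * b \<and> sA c (a * b) = a * sA c b)"

text \<open>Tensor product M \<otimes>_k N, as the quotient of the free k-module on M \<times> N
(finitely supported functions M \<times> N \<Rightarrow> k) by the submodule spanned by the
bilinearity relations.\<close>

definition tdelta :: "'m \<Rightarrow> 'n \<Rightarrow> ('m \<times> 'n \<Rightarrow> 'k::comm_ring_1)" where
  "tdelta m n = (\<lambda>z. if z = (m, n) then 1 else 0)"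

inductive_set tensor_rel ::
  "('k::comm_ring_1 \<Rightarrow> 'm::ab_group_add \<Rightarrow> 'm) \<Rightarrow> ('k \<Rightarrow> 'n::ab_group_add \<Rightarrow> 'n)
    \<Rightarrow> ('m \<times> 'n \<Rightarrow> 'k) set"
  for sM sN where
  zero: "(\<lambda>z. 0) \<in> tensor_rel sM sN"
| add: "f \<in> tensor_rel sM sN \<Longrightarrow> g \<in> tensor_rel sM sN \<Longrightarrow> (\<lambda>z. f z + g z) \<in> tensor_rel sM sN"
| smult: "f \<in> tensor_rel sM sN \<Longrightarrow> (\<lambda>z. c * f z) \<in> tensor_rel sM sN"
| addL: "(\<lambda>z. tdelta (m + m') n z - tdelta m n z - tdelta m' n z) \<in> tensor_rel sM sN"
| addR: "(\<lambda>z. tdelta m (n + n') z - tdelta m n z - tdelta m n' z) \<in> tensor_rel sM sN"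
| scaleL: "(\<lambda>z. tdelta (sM c m) n z - c * tdelta m n z) \<in> tensor_rel sM sN"
| scaleR: "(\<lambda>z. tdelta m (sN c n) z - c * tdelta m n z) \<in> tensor_rel sM sN"

definition tsum :: "('m \<times> 'n) list \<Rightarrow> ('m \<times> 'n \<Rightarrow> 'k::comm_ring_1)" where
  "tsum xs = (\<lambda>z. (\<Sum>(m, n)\<leftarrow>xs. tdelta m n z))"

definition tensor_eq ::
  "('k::comm_ring_1 \<Rightarrow> 'm::ab_group_add \<Rightarrow> 'm) \<Rightarrow> ('k \<Rightarrow> 'n::ab_group_add \<Rightarrow> 'n)
    \<Rightarrow> ('m \<times> 'n) list \<Rightarrow> ('m \<times> 'n) list \<Rightarrow> bool" where
  "tensor_eq sM sN xs ys \<longleftrightarrow>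
     (\<lambda>z. (tsum xs z :: 'k) - tsum ys z) \<in> tensor_rel sM sN"

text \<open>P is invertible, witnessed by a k-module R and a k-bilinear map beta : P \<times> R \<rightarrow> k
whose induced linear map P \<otimes>_k R \<rightarrow> k is bijective (i.e. P \<otimes>_k R \<cong> k).\<close>
definition invertible_witness ::
  "('k::comm_ring_1 \<Rightarrow> 'p::ab_group_add \<Rightarrow> 'p) \<Rightarrow> ('k \<Rightarrow> 'r::ab_group_add \<Rightarrow> 'r)
    \<Rightarrow> ('p \<Rightarrow> 'r \<Rightarrow> 'k) \<Rightarrow> bool" where
  "invertible_witness sP sR \<beta> \<longleftrightarrow> Modules.module sP \<and> Modules.module sR \<and>
     (\<forall>r. Modules.module_hom sP (*) (\<lambda>p. \<beta> p r)) \<and> (\<forall>p. Modules.module_hom sR (*) (\<lambda>r. \<beta> p r)) \<and>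
     (\<forall>c. \<exists>xs. (\<Sum>(p, r)\<leftarrow>xs. \<beta> p r) = c) \<and>
     (\<forall>xs ys. (\<Sum>(p, r)\<leftarrow>xs. \<beta> p r) = (\<Sum>(p, r)\<leftarrow>ys. \<beta> p r) \<longrightarrow> tensor_eq sP sR xs ys)"

text \<open>Finitely generated projective k-module (dual basis: a direct summand of k^n).\<close>
definition fg_projective :: "('k::comm_ring_1 \<Rightarrow> 'm::ab_group_add \<Rightarrow> 'm) \<Rightarrow> bool" where
  "fg_projective sM \<longleftrightarrow> Modules.module sM \<and>
     (\<exists>bs :: ('m \<times> ('m \<Rightarrow> 'k)) list. (\<forall>(e, f)\<in>set bs. Modules.module_hom sM (*) f) \<and>
        (\<forall>m. m = (\<Sum>(e, f)\<leftarrow>bs. sM (f m) e)))"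

text \<open>Frobenius system (psi, x_i, q_i, y_i) for a P-Frobenius algebra A, with the
finitely many triples (x_i, q_i, y_i) given as a list.\<close>
definition frobenius_system ::
  "('k::comm_ring_1 \<Rightarrow> 'a::ring_1 \<Rightarrow> 'a) \<Rightarrow> ('k \<Rightarrow> 'p::ab_group_add \<Rightarrow> 'p)
    \<Rightarrow> ('a \<Rightarrow> 'p) \<Rightarrow> ('a \<times> ('p \<Rightarrow> 'k) \<times> 'a) list \<Rightarrow> bool" where
  "frobenius_system sA sP \<psi> xqy \<longleftrightarrow>
     Modules.module_hom sA sP \<psi> \<and>
     (\<forall>a b. (\<lambda>x. \<psi> (a * x)) = (\<lambda>x. \<psi> (b * x)) \<longrightarrow> a = b) \<and>
     (\<forall>f. Modules.module_hom sA sP f \<longrightarrow> (\<exists>a. f = (\<lambda>x. \<psi> (a * x)))) \<and>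
     (\<forall>(x, q, y)\<in>set xqy. Modules.module_hom sP (*) q) \<and>
     (\<forall>a. (\<Sum>(x, q, y)\<leftarrow>xqy. sA (q (\<psi> (y * a))) x) = a) \<and>
     (\<forall>a. (\<Sum>(x, q, y)\<leftarrow>xqy. sA (q (\<psi> (a * x))) y) = a)"

text \<open>P-Frobenius: finitely generated projective and A_A \<cong> Hom_k(A,P)_A.\<close>
definition P_Frobenius ::
  "('k::comm_ring_1 \<Rightarrow> 'a::ring_1 \<Rightarrow> 'a) \<Rightarrow> ('k \<Rightarrow> 'p::ab_group_add \<Rightarrow> 'p) \<Rightarrow> bool" where
  "P_Frobenius sA sP \<longleftrightarrow> fg_projective sA \<and>
     (\<exists>\<phi> :: 'a \<Rightarrow> 'a \<Rightarrow> 'p. bij_betw \<phi> UNIV {f. Modules.module_hom sA sP f} \<and>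
        (\<forall>a b c. \<phi> (a + b) = (\<lambda>x. \<phi> a x + \<phi> b x) \<and> \<phi> (a * c) = (\<lambda>x. \<phi> a (c * x))))"

definition morita_invertible ::
  "('k::comm_ring_1 \<Rightarrow> 'a::ring_1 \<Rightarrow> 'a) \<Rightarrow> (('p \<Rightarrow> 'k) \<times> 'a) list \<Rightarrow> bool" where
  "morita_invertible sA u \<longleftrightarrow>
     (\<exists>pb :: ('p \<times> 'a) list.
        (\<Sum>(q, a)\<leftarrow>u. \<Sum>(p, b)\<leftarrow>pb. sA (q p) (a * b)) = 1)"

definition strongly_separable :: "('k::comm_ring_1 \<Rightarrow> 'a::ring_1 \<Rightarrow> 'a) \<Rightarrow> bool" where
  "strongly_separable sA \<longleftrightarrow>
     (\<exists>e :: ('a \<times> 'a) list. (\<Sum>(z, w)\<leftarrow>e. z * w) = 1 \<and>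
        (\<forall>a. tensor_eq sA sA (map (\<lambda>(z, w). (z * a, w)) e) (map (\<lambda>(z, w). (z, a * w)) e)))"

end

theory Submission
  imports Defs
begin


lemma rel_ext: "f \<in> tensor_rel sM sN \<Longrightarrow> (\<And>z. g z = f z) \<Longrightarrow> g \<in> tensor_rel sM sN"
proof -
  assume "f \<in> tensor_rel sM sN" "\<And>z. g z = f z"
  then have "g = f" by auto
  with \<open>f \<in> tensor_rel sM sN\<close> show ?thesis by simp
qed

lemma rel_neg: "f \<in> tensor_rel sM sN \<Longrightarrow> (\<lambda>z. - f z) \<in> tensor_rel sM sN"
  by (rule rel_ext[OF tensor_rel.smult[of f sM sN "-1"]]) auto

lemma rel_diff: "f \<in> tensor_rel sM sN \<Longrightarrow> g \<in> tensor_rel sM sN \<Longrightarrow> (\<lambda>z. f z - g z) \<in> tensor_rel sM sN"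
  by (rule rel_ext[OF tensor_rel.add[OF _ rel_neg]]) auto

lemma tsum_Nil[simp]: "tsum [] = (\<lambda>z. 0)"
  by (simp add: tsum_def)

lemma tsum_Cons: "tsum ((m, n) # xs) z = tdelta m n z + tsum xs z"
  by (simp add: tsum_def)

lemma tsum_append: "tsum (xs @ ys) z = tsum xs z + tsum ys z"
  by (simp add: tsum_def)

lemma T_of_tsum:
  fixes sM :: "'k::comm_ring_1 \<Rightarrow> 'm::ab_group_add \<Rightarrow> 'm" and sN :: "'k \<Rightarrow> 'n::ab_group_add \<Rightarrow> 'n"
  assumes "\<And>z. (tsum xs z :: 'k) = tsum ys z"
  shows "tensor_eq sM sN xs ys"
  unfolding tensor_eq_def by (rule rel_ext[OF tensor_rel.zero]) (simp add: assms)

lemma T_refl: "tensor_eq sM sN xs xs"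
  by (rule T_of_tsum) simp

lemma T_sym: "tensor_eq sM sN xs ys \<Longrightarrow> tensor_eq sM sN ys xs"
  unfolding tensor_eq_def by (rule rel_ext[OF rel_neg]) auto

lemma T_trans: "tensor_eq sM sN xs ys \<Longrightarrow> tensor_eq sM sN ys zs \<Longrightarrow> tensor_eq sM sN xs zs"
  unfolding tensor_eq_def by (erule rel_ext[OF tensor_rel.add]) auto

lemma T_append: "tensor_eq sM sN xs ys \<Longrightarrow> tensor_eq sM sN us vs \<Longrightarrow> tensor_eq sM sN (xs @ us) (ys @ vs)"
  unfolding tensor_eq_def by (erule rel_ext[OF tensor_rel.add]) (auto simp: tsum_append)

lemma T_concat: "(\<And>x. x \<in> set xs \<Longrightarrow> tensor_eq sM sN (f x) (g x)) \<Longrightarrow>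
   tensor_eq sM sN (concat (map f xs)) (concat (map g xs))"
  by (induction xs) (auto intro: T_refl T_append)

lemma T_map: "(\<And>x. x \<in> set xs \<Longrightarrow> tensor_eq sM sN [f x] [g x]) \<Longrightarrow>
   tensor_eq sM sN (map f xs) (map g xs)"
proof -
  assume a: "\<And>x. x \<in> set xs \<Longrightarrow> tensor_eq sM sN [f x] [g x]"
  have "tensor_eq sM sN (concat (map (\<lambda>x. [f x]) xs)) (concat (map (\<lambda>x. [g x]) xs))"
    by (rule T_concat) (rule a)
  moreover have "concat (map (\<lambda>x. [f x]) xs) = map f xs" "concat (map (\<lambda>x. [g x]) xs) = map g xs"
    by (induction xs) auto
  ultimately show ?thesis by simp
qed

lemma T_addL: "tensor_eq sM sN [(m + m', n)] [(m, n), (m', n)]"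
  unfolding tensor_eq_def
  by (rule rel_ext[OF tensor_rel.addL[where m=m and m'=m' and n=n]]) (simp add: tsum_def algebra_simps)

lemma T_addR: "tensor_eq sM sN [(m, n + n')] [(m, n), (m, n')]"
  unfolding tensor_eq_def
  by (rule rel_ext[OF tensor_rel.addR[where m=m and n'=n' and n=n]]) (simp add: tsum_def algebra_simps)

lemma T_zeroL: "tensor_eq sM sN [(0, n)] []"
  unfolding tensor_eq_def
  by (rule rel_ext[OF rel_neg[OF tensor_rel.addL[where m=0 and m'=0 and n=n]]]) (simp add: tsum_def algebra_simps)

lemma T_zeroR: "tensor_eq sM sN [(m, 0)] []"
  unfolding tensor_eq_def
  by (rule rel_ext[OF rel_neg[OF tensor_rel.addR[where m=m and n'=0 and n=0]]]) (simp add: tsum_def algebra_simps)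

lemma T_scal: "tensor_eq sM sN [(sM c m, n)] [(m, sN c n)]"
  unfolding tensor_eq_def
  by (rule rel_ext[OF rel_diff[OF tensor_rel.scaleL[where c=c and m=m and n=n] tensor_rel.scaleR[where c=c and m=m and n=n]]])
     (simp add: tsum_def algebra_simps)

lemma T_sumL: "tensor_eq sM sN [(\<Sum>k\<leftarrow>ks. f k, n)] (map (\<lambda>k. (f k, n)) ks)"
proof (induction ks)
  case Nil
  then show ?case by (simp add: T_zeroL)
next
  case (Cons k ks)
  have 1: "tensor_eq sM sN [(f k + (\<Sum>k\<leftarrow>ks. f k), n)] ([(f k, n)] @ [((\<Sum>k\<leftarrow>ks. f k), n)])"
    using T_addL by simp
  have 2: "tensor_eq sM sN \<dots> ([(f k, n)] @ map (\<lambda>k. (f k, n)) ks)"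
    by (rule T_append[OF T_refl Cons.IH])
  show ?case using T_trans[OF 1 2] by simp
qed

lemma T_sumR: "tensor_eq sM sN [(m, \<Sum>k\<leftarrow>ks. f k)] (map (\<lambda>k. (m, f k)) ks)"
proof (induction ks)
  case Nil
  then show ?case by (simp add: T_zeroR)
next
  case (Cons k ks)
  have 1: "tensor_eq sM sN [(m, f k + (\<Sum>k\<leftarrow>ks. f k))] ([(m, f k)] @ [(m, (\<Sum>k\<leftarrow>ks. f k))])"
    using T_addR by simp
  have 2: "tensor_eq sM sN \<dots> ([(m, f k)] @ map (\<lambda>k. (m, f k)) ks)"
    by (rule T_append[OF T_refl Cons.IH])
  show ?case using T_trans[OF 1 2] by simp
qed



lemma sum_supp:
  fixes f :: "'z \<Rightarrow> 'k::comm_ring_1"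
  assumes "finite S" "{z. f z \<noteq> 0} \<subseteq> S"
  shows "(\<Sum>z\<in>S. f z * g z) = (\<Sum>z\<in>{z. f z \<noteq> 0}. f z * g z)"
  by (rule sum.mono_neutral_right) (use assms in auto)

lemma tdelta_sum:
  fixes g :: "'m \<times> 'n \<Rightarrow> 'k::comm_ring_1"
  assumes "finite U" "(a, b) \<in> U"
  shows "(\<Sum>z\<in>U. (tdelta a b z :: 'k) * g z) = g (a, b)"
proof -
  have "(\<Sum>z\<in>U. (tdelta a b z :: 'k) * g z) = (\<Sum>z\<in>U. if z = (a, b) then g z else 0)"
    by (rule sum.cong) (auto simp: tdelta_def)
  also have "\<dots> = g (a, b)" using assms by (simp add: sum.delta')
  finally show ?thesis .
qed

lemma tdelta_zero: "z \<noteq> (a, b) \<Longrightarrow> tdelta a b z = 0"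
  by (simp add: tdelta_def)

locale bil =
  fixes sM :: "'k::comm_ring_1 \<Rightarrow> 'm::ab_group_add \<Rightarrow> 'm" and sN :: "'k \<Rightarrow> 'n::ab_group_add \<Rightarrow> 'n"
    and G :: "'m \<Rightarrow> 'n \<Rightarrow> 'k"
  assumes gL: "G (m + m') n = G m n + G m' n"
    and gR: "G m (n + n') = G m n + G m n'"
    and sL: "G (sM c m) n = c * G m n"
    and sR: "G m (sN c n) = c * G m n"
begin

lemma gen3:
  fixes f :: "'m \<times> 'n \<Rightarrow> 'k"
  assumes "f = (\<lambda>z. tdelta a1 b1 z - tdelta a2 b2 z - tdelta a3 b3 z)"
    and "G a1 b1 - G a2 b2 - G a3 b3 = 0"
  shows "finite {z. f z \<noteq> 0} \<and> (\<Sum>z\<in>{z. f z \<noteq> 0}. f z * case_prod G z) = 0"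
proof -
  let ?U = "{(a1, b1), (a2, b2), (a3, b3)}"
  have sub: "{z. f z \<noteq> 0} \<subseteq> ?U" using assms(1) by (auto simp: tdelta_def split: if_splits)
  have fin: "finite {z. f z \<noteq> 0}" by (rule finite_subset[OF sub]) auto
  have "(\<Sum>z\<in>{z. f z \<noteq> 0}. f z * case_prod G z) = (\<Sum>z\<in>?U. f z * case_prod G z)"
    by (rule sum_supp[symmetric]) (use sub in auto)
  also have "\<dots> = (\<Sum>z\<in>?U. tdelta a1 b1 z * case_prod G z) - (\<Sum>z\<in>?U. tdelta a2 b2 z * case_prod G z)
      - (\<Sum>z\<in>?U. tdelta a3 b3 z * case_prod G z)"
    by (simp add: assms(1) left_diff_distrib sum_subtractf)
  also have "\<dots> = 0" using assms(2) by (simp add: tdelta_sum)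
  finally show ?thesis using fin by simp
qed

lemma gen2:
  fixes f :: "'m \<times> 'n \<Rightarrow> 'k"
  assumes "f = (\<lambda>z. tdelta a1 b1 z - c * tdelta a2 b2 z)"
    and "G a1 b1 - c * G a2 b2 = 0"
  shows "finite {z. f z \<noteq> 0} \<and> (\<Sum>z\<in>{z. f z \<noteq> 0}. f z * case_prod G z) = 0"
proof -
  let ?U = "{(a1, b1), (a2, b2)}"
  have sub: "{z. f z \<noteq> 0} \<subseteq> ?U" using assms(1) by (auto simp: tdelta_def split: if_splits)
  have fin: "finite {z. f z \<noteq> 0}" by (rule finite_subset[OF sub]) auto
  have "(\<Sum>z\<in>{z. f z \<noteq> 0}. f z * case_prod G z) = (\<Sum>z\<in>?U. f z * case_prod G z)"
    by (rule sum_supp[symmetric]) (use sub in auto)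
  also have "\<dots> = (\<Sum>z\<in>?U. tdelta a1 b1 z * case_prod G z) - c * (\<Sum>z\<in>?U. tdelta a2 b2 z * case_prod G z)"
    by (simp add: assms(1) algebra_simps sum_subtractf sum_distrib_left)
  also have "\<dots> = 0" using assms(2) by (simp add: tdelta_sum)
  finally show ?thesis using fin by simp
qed

lemma rel_kill:
  assumes "f \<in> tensor_rel sM sN"
  shows "finite {z. f z \<noteq> 0} \<and> (\<Sum>z\<in>{z. f z \<noteq> 0}. f z * case_prod G z) = 0"
  using assms
proof (induction rule: tensor_rel.induct)
  case zero
  then show ?case by simp
next
  case (add f g)
  let ?U = "{z. f z \<noteq> 0} \<union> {z. g z \<noteq> 0}"
  have sub: "{z. f z + g z \<noteq> 0} \<subseteq> ?U" by auto
  have finU: "finite ?U" using add by auto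
  have "(\<Sum>z\<in>{z. f z + g z \<noteq> 0}. (f z + g z) * case_prod G z) = (\<Sum>z\<in>?U. (f z + g z) * case_prod G z)"
    by (rule sum_supp[symmetric, of ?U "\<lambda>z. f z + g z"]) (use finU sub in auto)
  also have "\<dots> = (\<Sum>z\<in>?U. f z * case_prod G z) + (\<Sum>z\<in>?U. g z * case_prod G z)"
    by (simp add: algebra_simps sum.distrib)
  also have "\<dots> = 0"
    using sum_supp[OF finU, of f "case_prod G"] sum_supp[OF finU, of g "case_prod G"] add by auto
  finally show ?case using finite_subset[OF sub finU] by simp
next
  case (smult f c)
  have sub: "{z. c * f z \<noteq> 0} \<subseteq> {z. f z \<noteq> 0}" by auto
  have fin: "finite {z. f z \<noteq> 0}" using smult by auto
  have "(\<Sum>z\<in>{z. c * f z \<noteq> 0}. (c * f z) * case_prod G z) = (\<Sum>z\<in>{z. f z \<noteq> 0}. (c * f z) * case_prod G z)"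
    by (rule sum_supp[symmetric, of _ "\<lambda>z. c * f z"]) (use fin sub in auto)
  also have "\<dots> = c * (\<Sum>z\<in>{z. f z \<noteq> 0}. f z * case_prod G z)"
    by (simp add: sum_distrib_left algebra_simps)
  also have "\<dots> = 0" using smult by simp
  finally show ?case using finite_subset[OF sub fin] by simp
next
  case (addL m m' n)
  show ?case by (rule gen3[OF refl]) (simp add: gL)
next
  case (addR m n n')
  show ?case by (rule gen3[OF refl]) (simp add: gR)
next
  case (scaleL c m n)
  show ?case by (rule gen2[OF refl]) (simp add: sL)
next
  case (scaleR m c n)
  show ?case by (rule gen2[OF refl]) (simp add: sR)
qed

lemma tsum_sum:
  assumes "finite U" "set xs \<subseteq> U"
  shows "(\<Sum>z\<in>U. (tsum xs z :: 'k) * case_prod G z) = (\<Sum>(m, n)\<leftarrow>xs. G m n)"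
  using assms(2)
proof (induction xs)
  case Nil
  then show ?case by simp
next
  case (Cons x xs)
  obtain m n where x: "x = (m, n)" by (cases x)
  have "(\<Sum>z\<in>U. (tsum (x # xs) z :: 'k) * case_prod G z)
      = (\<Sum>z\<in>U. tdelta m n z * case_prod G z) + (\<Sum>z\<in>U. (tsum xs z :: 'k) * case_prod G z)"
    by (simp add: x tsum_Cons algebra_simps sum.distrib)
  also have "\<dots> = G m n + (\<Sum>(m, n)\<leftarrow>xs. G m n)"
    using Cons assms(1) x by (simp add: tdelta_sum)
  finally show ?case by (simp add: x)
qed

lemma factor:
  assumes "tensor_eq sM sN xs ys"
  shows "(\<Sum>(m, n)\<leftarrow>xs. G m n) = (\<Sum>(m, n)\<leftarrow>ys. G m n)"
proof -
  let ?f = "\<lambda>z. (tsum xs z :: 'k) - tsum ys z"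
  let ?U = "set xs \<union> set ys"
  have k: "finite {z. ?f z \<noteq> 0} \<and> (\<Sum>z\<in>{z. ?f z \<noteq> 0}. ?f z * case_prod G z) = 0"
    using rel_kill assms unfolding tensor_eq_def by blast
  have sub: "{z. ?f z \<noteq> 0} \<subseteq> ?U"
  proof
    fix z assume "z \<in> {z. ?f z \<noteq> 0}"
    then have "tsum xs z \<noteq> (0::'k) \<or> tsum ys z \<noteq> (0::'k)" by auto
    moreover have "z \<notin> set ws \<Longrightarrow> (tsum ws z :: 'k) = 0" for ws :: "('m \<times> 'n) list"
      by (induction ws) (auto simp: tsum_Cons tdelta_def)
    ultimately show "z \<in> ?U" by auto
  qed
  have "0 = (\<Sum>z\<in>?U. ?f z * case_prod G z)"
    using k sum_supp[of ?U ?f "case_prod G"] sub by simp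
  also have "\<dots> = (\<Sum>z\<in>?U. (tsum xs z :: 'k) * case_prod G z) - (\<Sum>z\<in>?U. (tsum ys z :: 'k) * case_prod G z)"
    by (simp add: algebra_simps sum_subtractf)
  also have "\<dots> = (\<Sum>(m, n)\<leftarrow>xs. G m n) - (\<Sum>(m, n)\<leftarrow>ys. G m n)"
    by (simp add: tsum_sum)
  finally show ?thesis by simp
qed

end



lemma sum_list_swap:
  "(\<Sum>i\<leftarrow>is. \<Sum>k\<leftarrow>ks. g i k) = (\<Sum>k\<leftarrow>ks. \<Sum>i\<leftarrow>is. (g i k :: 'a::comm_monoid_add))"
  by (induction "is") (auto simp: sum_list_addf)

lemma pow_aux:
  fixes x b S :: "'k::comm_ring_1"
  assumes "x * b^2 = 0"
  shows "x * (b + S)^(N + 1) = x * S^(N + 1) + of_nat (N + 1) * x * b * S^N"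
proof (induction N)
  case 0
  then show ?case by (simp add: algebra_simps)
next
  case (Suc N)
  have "x * (b + S)^(Suc N + 1) = (b + S) * (x * (b + S)^(N + 1))" by (simp add: algebra_simps)
  also have "\<dots> = (b + S) * (x * S^(N + 1) + of_nat (N + 1) * x * b * S^N)" using Suc by simp
  also have "\<dots> = x * S^(N+2) + of_nat (N + 1) * x * b * S^(N+1) + x * b * S^(N+1) + of_nat (N + 1) * (x * b^2) * S^N"
    by (simp add: algebra_simps power2_eq_square)
  also have "\<dots> = x * S^(Suc N + 1) + of_nat (Suc N + 1) * x * b * S^(Suc N)"
    using assms by (simp add: algebra_simps)
  finally show ?case .
qed

lemma pigeon:
  fixes x :: "'k::comm_ring_1"
  assumes "\<And>b. b \<in> set bs \<Longrightarrow> x * b^2 = 0"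
  shows "x * (sum_list bs)^(length bs + 1) = 0"
  using assms
proof (induction bs)
  case Nil
  then show ?case by simp
next
  case (Cons b bs)
  have IH: "x * (sum_list bs)^(length bs + 1) = 0" using Cons by simp
  have "x * (b + sum_list bs)^(length bs + 1 + 1) = x * (sum_list bs)^(length bs + 1 + 1) + of_nat (length bs + 1 + 1) * x * b * (sum_list bs)^(length bs + 1)"
    by (rule pow_aux) (use Cons in simp)
  also have "\<dots> = sum_list bs * (x * (sum_list bs)^(length bs + 1)) + of_nat (length bs + 1 + 1) * b * (x * (sum_list bs)^(length bs + 1))"
    by (simp add: algebra_simps)
  also have "\<dots> = 0" using IH by simp
  finally show ?case by simp
qed

definition lin :: "('k::comm_ring_1 \<Rightarrow> 'p::ab_group_add \<Rightarrow> 'p) \<Rightarrow> ('p \<Rightarrow> 'k) \<Rightarrow> bool" where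
  "lin sP q \<longleftrightarrow> Modules.module_hom sP (*) q"

lemma lin_add: "lin sP q \<Longrightarrow> q (x + y) = q x + q y"
  unfolding lin_def using module_hom.add by blast

lemma lin_scale: "lin sP q \<Longrightarrow> q (sP c x) = c * q x"
  unfolding lin_def using module_hom.scale by blast

lemma lin_sum: "lin sP q \<Longrightarrow> q (\<Sum>l\<leftarrow>ls. f l) = (\<Sum>l\<leftarrow>ls. q (f l))"
proof (induction ls)
  case Nil
  then show ?case unfolding lin_def using module_hom.zero by fastforce
next
  case (Cons a ls)
  then show ?case by (simp add: lin_add)
qed



lemma sum_list_cong_pair:
  "(\<And>p r. (p, r) \<in> set E \<Longrightarrow> f p r = g p r) \<Longrightarrow> (\<Sum>(p, r)\<leftarrow>E. f p r) = (\<Sum>(p, r)\<leftarrow>E. g p r)"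
  by (rule arg_cong[where f=sum_list], rule map_cong) auto

locale invw =
  fixes sP :: "'k::comm_ring_1 \<Rightarrow> 'p::ab_group_add \<Rightarrow> 'p" and sR :: "'k \<Rightarrow> 'r::ab_group_add \<Rightarrow> 'r"
    and \<beta> :: "'p \<Rightarrow> 'r \<Rightarrow> 'k" and E :: "('p \<times> 'r) list"
  assumes iw: "invertible_witness sP sR \<beta>"
    and E1: "(\<Sum>(p, r)\<leftarrow>E. \<beta> p r) = 1"
begin

lemma linL: "lin sP (\<lambda>p. \<beta> p r)" using iw unfolding invertible_witness_def lin_def by blast
lemma linR: "lin sR (\<lambda>r. \<beta> p r)" using iw unfolding invertible_witness_def lin_def by blast

lemma B:
  assumes q: "lin sP q" and h: "lin sR h"
  shows "q x * h s = \<beta> x s * (\<Sum>(p, r)\<leftarrow>E. q p * h r)"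
proof -
  interpret bil sP sR "\<lambda>y t. q y * h t"
    by unfold_locales (auto simp: lin_add[OF q] lin_add[OF h] lin_scale[OF q] lin_scale[OF h] algebra_simps)
  have inj: "\<forall>xs ys. (\<Sum>(p, r)\<leftarrow>xs. \<beta> p r) = (\<Sum>(p, r)\<leftarrow>ys. \<beta> p r) \<longrightarrow> tensor_eq sP sR xs ys"
    using iw unfolding invertible_witness_def by blast
  have "(\<Sum>(p, r)\<leftarrow>map (\<lambda>(p, r). (sP (\<beta> x s) p, r)) E. \<beta> p r) = (\<Sum>(p, r)\<leftarrow>E. \<beta> x s * \<beta> p r)"
    by (simp add: o_def case_prod_unfold lin_scale[OF linL])
  also have "\<dots> = \<beta> x s" using E1 by (simp add: sum_list_const_mult case_prod_unfold)
  finally have "tensor_eq sP sR [(x, s)] (map (\<lambda>(p, r). (sP (\<beta> x s) p, r)) E)"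
    using inj by simp
  from factor[OF this]
  have "q x * h s = (\<Sum>(p, r)\<leftarrow>map (\<lambda>(p, r). (sP (\<beta> x s) p, r)) E. q p * h r)" by simp
  also have "\<dots> = (\<Sum>(p, r)\<leftarrow>E. \<beta> x s * (q p * h r))"
    by (simp add: o_def case_prod_unfold lin_scale[OF q] algebra_simps)
  also have "\<dots> = \<beta> x s * (\<Sum>(p, r)\<leftarrow>E. q p * h r)"
    by (simp add: sum_list_const_mult case_prod_unfold)
  finally show ?thesis .
qed

lemma B1: "\<beta> y s1 * \<beta> z s = \<beta> y s * (\<Sum>(p, r)\<leftarrow>E. \<beta> p s1 * \<beta> z r)"
  by (rule B[OF linL linR])

definition "\<gamma> = (\<Sum>(pm, rm)\<leftarrow>E. \<Sum>(pl, rl)\<leftarrow>E. \<beta> pl rm * \<beta> pm rl)"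

lemma step2: "(\<Sum>(p, r)\<leftarrow>E. \<beta> y r * \<beta> p s) = \<gamma> * \<beta> y s"
proof -
  have "(\<Sum>(p, r)\<leftarrow>E. \<beta> y r * \<beta> p s) = (\<Sum>(pm, rm)\<leftarrow>E. \<beta> y s * (\<Sum>(pl, rl)\<leftarrow>E. \<beta> pl rm * \<beta> pm rl))"
    by (rule sum_list_cong_pair) (rule B1)
  also have "\<dots> = \<beta> y s * \<gamma>"
    unfolding \<gamma>_def by (simp add: sum_list_const_mult case_prod_unfold)
  finally show ?thesis by (simp add: mult.commute)
qed

lemma step3: "(1 - \<gamma>) * (\<beta> z s)^2 = 0"
proof -
  have "\<beta> z s * \<beta> z s = \<beta> z s * (\<Sum>(p, r)\<leftarrow>E. \<beta> p s * \<beta> z r)" by (rule B1)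
  also have "(\<Sum>(p, r)\<leftarrow>E. \<beta> p s * \<beta> z r) = \<gamma> * \<beta> z s"
    using step2[of z s] by (simp add: mult.commute)
  finally show ?thesis by (simp add: algebra_simps power2_eq_square)
qed

lemma gamma1: "\<gamma> = 1"
proof -
  have "(1 - \<gamma>) * (sum_list (map (\<lambda>(p, r). \<beta> p r) E))^(length (map (\<lambda>(p, r). \<beta> p r) E) + 1) = 0"
    by (rule pigeon) (auto simp: step3)
  then show ?thesis using E1 by simp
qed

lemma step5: "(\<Sum>(p, r)\<leftarrow>E. \<beta> y r * \<beta> p s) = \<beta> y s"
  using step2 gamma1 by simp

lemma step6:
  assumes q: "lin sP q"
  shows "(\<Sum>(p, r)\<leftarrow>E. \<beta> y r * q p) = q y"
proof -
  have B2: "q x * \<beta> z s = \<beta> x s * (\<Sum>(p, r)\<leftarrow>E. q p * \<beta> z r)" for x z s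
    by (rule B[OF q linR])
  have "q y = (\<Sum>(pm, rm)\<leftarrow>E. q y * \<beta> pm rm)"
    using E1 by (simp add: sum_list_const_mult case_prod_unfold)
  also have "\<dots> = (\<Sum>(pm, rm)\<leftarrow>E. \<beta> y rm * (\<Sum>(pl, rl)\<leftarrow>E. q pl * \<beta> pm rl))"
    by (rule sum_list_cong_pair) (rule B2)
  also have "\<dots> = (\<Sum>(pm, rm)\<leftarrow>E. \<Sum>(pl, rl)\<leftarrow>E. q pl * (\<beta> y rm * \<beta> pm rl))"
  proof (rule sum_list_cong_pair)
    fix pm rm
    have "\<beta> y rm * (\<Sum>(pl, rl)\<leftarrow>E. q pl * \<beta> pm rl) = (\<Sum>(pl, rl)\<leftarrow>E. \<beta> y rm * (q pl * \<beta> pm rl))"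
      by (simp add: sum_list_const_mult case_prod_unfold)
    also have "\<dots> = (\<Sum>(pl, rl)\<leftarrow>E. q pl * (\<beta> y rm * \<beta> pm rl))"
      by (rule sum_list_cong_pair) (simp add: ac_simps)
    finally show "\<beta> y rm * (\<Sum>(pl, rl)\<leftarrow>E. q pl * \<beta> pm rl) = (\<Sum>(pl, rl)\<leftarrow>E. q pl * (\<beta> y rm * \<beta> pm rl))" .
  qed
  also have "\<dots> = (\<Sum>(pl, rl)\<leftarrow>E. \<Sum>(pm, rm)\<leftarrow>E. q pl * (\<beta> y rm * \<beta> pm rl))"
    unfolding case_prod_unfold by (rule sum_list_swap)
  also have "\<dots> = (\<Sum>(pl, rl)\<leftarrow>E. q pl * \<beta> y rl)"
  proof (rule sum_list_cong_pair)
    fix pl rl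
    have "(\<Sum>(pm, rm)\<leftarrow>E. q pl * (\<beta> y rm * \<beta> pm rl)) = q pl * (\<Sum>(pm, rm)\<leftarrow>E. \<beta> y rm * \<beta> pm rl)"
      by (simp add: sum_list_const_mult case_prod_unfold)
    also have "\<dots> = q pl * \<beta> y rl" by (simp only: step5)
    finally show "(\<Sum>(pm, rm)\<leftarrow>E. q pl * (\<beta> y rm * \<beta> pm rl)) = q pl * \<beta> y rl" .
  qed
  finally show ?thesis by (simp add: mult.commute)
qed

lemma step7:
  assumes q: "lin sP q"
  shows "q y * \<beta> x s = \<beta> y s * q x"
proof -
  have "q y * \<beta> x s = \<beta> y s * (\<Sum>(p, r)\<leftarrow>E. q p * \<beta> x r)"
    by (rule B[OF q linR])
  also have "(\<Sum>(p, r)\<leftarrow>E. q p * \<beta> x r) = q x"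
    using step6[OF q, of x] by (simp add: mult.commute)
  finally show ?thesis .
qed

lemma symm:
  assumes q: "lin sP q" and q': "lin sP q'"
  shows "q p * q' t = q t * q' p"
proof -
  have "q p * q' t = (\<Sum>(pl, rl)\<leftarrow>E. q p * (q' t * \<beta> pl rl))"
    using E1 by (simp add: sum_list_const_mult case_prod_unfold)
  also have "\<dots> = (\<Sum>(pl, rl)\<leftarrow>E. (q p * \<beta> t rl) * q' pl)"
  proof (rule sum_list_cong_pair)
    fix pl rl
    have e: "q' t * \<beta> pl rl = \<beta> t rl * q' pl" by (rule step7[OF q'])
    show "q p * (q' t * \<beta> pl rl) = (q p * \<beta> t rl) * q' pl" unfolding e by (simp add: ac_simps)
  qed
  also have "\<dots> = (\<Sum>(pl, rl)\<leftarrow>E. q t * (\<beta> p rl * q' pl))"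
  proof (rule sum_list_cong_pair)
    fix pl rl
    have e: "q p * \<beta> t rl = \<beta> p rl * q t" by (rule step7[OF q])
    show "(q p * \<beta> t rl) * q' pl = q t * (\<beta> p rl * q' pl)" unfolding e by (simp add: ac_simps)
  qed
  also have "\<dots> = q t * q' p"
    using step6[OF q', of p] by (simp add: sum_list_const_mult case_prod_unfold)
  finally show ?thesis .
qed

end

lemma inv_symm:
  assumes "invertible_witness sP sR \<beta>" "lin sP q" "lin sP q'"
  shows "q p * q' t = q t * q' p"
proof -
  obtain E where "(\<Sum>(p, r)\<leftarrow>E. \<beta> p r) = 1"
    using assms(1) unfolding invertible_witness_def by blast
  then interpret invw sP sR \<beta> E using assms(1) by unfold_locales
  show ?thesis by (rule symm[OF assms(2,3)])
qed



lemma sum_list_concat_map: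
  "(\<Sum>w\<leftarrow>concat (map F L). f w) = (\<Sum>l\<leftarrow>L. \<Sum>w\<leftarrow>F l. (f w :: 'a::monoid_add))"
  by (induction L) auto

lemma tsum_alt: "tsum xs z = (\<Sum>w\<leftarrow>xs. tdelta (fst w) (snd w) z)"
  by (simp add: tsum_def case_prod_unfold)

lemma scale_sum_list:
  assumes "Modules.module s"
  shows "s c (\<Sum>k\<leftarrow>ks. f k) = (\<Sum>k\<leftarrow>ks. s c (f k))"
proof (induction ks)
  case Nil
  then show ?case using module.scale_zero_right[OF assms] by simp
next
  case (Cons a ks)
  then show ?case using module.scale_right_distrib[OF assms] by simp
qed

lemma main:
  fixes sA :: "'k::comm_ring_1 \<Rightarrow> 'a::ring_1 \<Rightarrow> 'a"
    and sP :: "'k \<Rightarrow> 'p::ab_group_add \<Rightarrow> 'p"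
    and \<psi> :: "'a \<Rightarrow> 'p"
    and X :: "('a \<times> ('p \<Rightarrow> 'k) \<times> 'a) list"
    and pb :: "('p \<times> 'a) list"
  defines "xx \<equiv> (\<lambda>t::('a \<times> ('p \<Rightarrow> 'k) \<times> 'a). fst t)"
    and "qq \<equiv> (\<lambda>t::('a \<times> ('p \<Rightarrow> 'k) \<times> 'a). fst (snd t))"
    and "yy \<equiv> (\<lambda>t::('a \<times> ('p \<Rightarrow> 'k) \<times> 'a). snd (snd t))"
  assumes mod: "Modules.module sA"
    and alg1: "\<And>c a b. sA c (a * b) = sA c a * b"
    and alg2: "\<And>c a b. sA c (a * b) = a * sA c b"
    and sym: "\<And>i k w p. i \<in> set X \<Longrightarrow> k \<in> set X \<Longrightarrow> qq k w * qq i p = qq k p * qq i w"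
    and F1: "\<And>a. (\<Sum>t\<leftarrow>X. sA (qq t (\<psi> (yy t * a))) (xx t)) = a"
    and F2: "\<And>a. (\<Sum>t\<leftarrow>X. sA (qq t (\<psi> (a * xx t))) (yy t)) = a"
    and mor: "(\<Sum>t\<leftarrow>X. \<Sum>j\<leftarrow>pb. sA (qq t (fst j)) ((yy t * xx t) * snd j)) = 1"
  shows "strongly_separable sA"
proof -
  have ss: "sA c (sA d w) = sA (c * d) w" for c d w using module.scale_scale[OF mod] by simp
  define e where "e = concat (map (\<lambda>j. map (\<lambda>t. (yy t, sA (qq t (fst j)) (xx t * snd j))) X) pb)"
  have one: "(\<Sum>(z, w)\<leftarrow>e. z * w) = 1"
  proof -
    have "(\<Sum>(z, w)\<leftarrow>e. z * w) = (\<Sum>j\<leftarrow>pb. \<Sum>t\<leftarrow>X. yy t * sA (qq t (fst j)) (xx t * snd j))"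
      unfolding e_def by (simp add: sum_list_concat_map o_def)
    also have "\<dots> = (\<Sum>j\<leftarrow>pb. \<Sum>t\<leftarrow>X. sA (qq t (fst j)) ((yy t * xx t) * snd j))"
      by (simp add: alg2[symmetric] mult.assoc)
    also have "\<dots> = 1" using mor by (simp add: sum_list_swap[of _ pb])
    finally show ?thesis .
  qed
  have inv: "tensor_eq sA sA (map (\<lambda>(z, w). (z * a, w)) e) (map (\<lambda>(z, w). (z, a * w)) e)" for a
  proof -
    have per_j: "tensor_eq sA sA (map (\<lambda>t. (yy t * a, sA (qq t p) (xx t * b))) X)
                                 (map (\<lambda>t. (yy t, a * sA (qq t p) (xx t * b))) X)" for p b
    proof -
      define N where "N i k = (yy k, sA (qq k (\<psi> ((yy i * a) * xx k)) * qq i p) (xx i * b))" for i k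
      define M where "M i k = (yy i, sA (qq i p * qq k (\<psi> (yy k * (a * xx i)))) (xx k * b))" for i k
      have L1: "tensor_eq sA sA [(yy i * a, sA (qq i p) (xx i * b))] (map (N i) X)" for i
      proof -
        have "tensor_eq sA sA [(yy i * a, sA (qq i p) (xx i * b))]
                 [(\<Sum>k\<leftarrow>X. sA (qq k (\<psi> ((yy i * a) * xx k))) (yy k), sA (qq i p) (xx i * b))]"
          using F2[of "yy i * a"] by (simp add: T_refl)
        moreover have "tensor_eq sA sA [(\<Sum>k\<leftarrow>X. sA (qq k (\<psi> ((yy i * a) * xx k))) (yy k), sA (qq i p) (xx i * b))]
                 (map (\<lambda>k. (sA (qq k (\<psi> ((yy i * a) * xx k))) (yy k), sA (qq i p) (xx i * b))) X)"
          by (rule T_sumL)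
        moreover have "tensor_eq sA sA (map (\<lambda>k. (sA (qq k (\<psi> ((yy i * a) * xx k))) (yy k), sA (qq i p) (xx i * b))) X)
                 (map (N i) X)"
        proof (rule T_map)
          fix k
          have "tensor_eq sA sA [(sA (qq k (\<psi> ((yy i * a) * xx k))) (yy k), sA (qq i p) (xx i * b))]
                 [(yy k, sA (qq k (\<psi> ((yy i * a) * xx k))) (sA (qq i p) (xx i * b)))]"
            by (rule T_scal)
          then show "tensor_eq sA sA [(sA (qq k (\<psi> ((yy i * a) * xx k))) (yy k), sA (qq i p) (xx i * b))] [N i k]"
            by (simp add: N_def ss)
        qed
        ultimately show ?thesis by (blast intro: T_trans)
      qed
      have R1: "tensor_eq sA sA [(yy i, a * sA (qq i p) (xx i * b))] (map (M i) X)" for i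
      proof -
        have "a * sA (qq i p) (xx i * b) = sA (qq i p) ((a * xx i) * b)"
          by (simp add: alg2[symmetric] mult.assoc)
        also have "\<dots> = sA (qq i p) ((\<Sum>k\<leftarrow>X. sA (qq k (\<psi> (yy k * (a * xx i)))) (xx k)) * b)"
          using F1[of "a * xx i"] by simp
        also have "\<dots> = (\<Sum>k\<leftarrow>X. sA (qq i p * qq k (\<psi> (yy k * (a * xx i)))) (xx k * b))"
          by (simp add: sum_list_mult_const[symmetric] alg1[symmetric] scale_sum_list[OF mod] ss)
        finally have eq: "a * sA (qq i p) (xx i * b) = (\<Sum>k\<leftarrow>X. sA (qq i p * qq k (\<psi> (yy k * (a * xx i)))) (xx k * b))" .
        show ?thesis unfolding eq M_def by (rule T_sumR)
      qed
      have A: "tensor_eq sA sA (map (\<lambda>t. (yy t * a, sA (qq t p) (xx t * b))) X) (concat (map (\<lambda>i. map (N i) X) X))"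
      proof -
        have "map (\<lambda>t. (yy t * a, sA (qq t p) (xx t * b))) X = concat (map (\<lambda>i. [(yy i * a, sA (qq i p) (xx i * b))]) X)"
          by (induction X) auto
        then show ?thesis using T_concat[where xs=X and f="\<lambda>i. [(yy i * a, sA (qq i p) (xx i * b))]" and g="\<lambda>i. map (N i) X" and sM=sA and sN=sA] L1
          by simp
      qed
      have B: "tensor_eq sA sA (map (\<lambda>t. (yy t, a * sA (qq t p) (xx t * b))) X) (concat (map (\<lambda>i. map (M i) X) X))"
      proof -
        have "map (\<lambda>t. (yy t, a * sA (qq t p) (xx t * b))) X = concat (map (\<lambda>i. [(yy i, a * sA (qq i p) (xx i * b))]) X)"
          by (induction X) auto
        then show ?thesis using T_concat[where xs=X and f="\<lambda>i. [(yy i, a * sA (qq i p) (xx i * b))]" and g="\<lambda>i. map (M i) X" and sM=sA and sN=sA] R1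
          by simp
      qed
      have C: "tensor_eq sA sA (concat (map (\<lambda>i. map (N i) X) X)) (concat (map (\<lambda>i. map (M i) X) X))"
      proof (rule T_of_tsum)
        fix z
        have NM: "N i k = M k i" if "i \<in> set X" "k \<in> set X" for i k
          unfolding N_def M_def using sym[OF that, of "\<psi> (yy i * (a * xx k))" p] by (simp add: mult.assoc)
        have "tsum (concat (map (\<lambda>i. map (N i) X) X)) z = (\<Sum>i\<leftarrow>X. \<Sum>k\<leftarrow>X. tdelta (fst (N i k)) (snd (N i k)) z)"
          by (simp add: tsum_alt sum_list_concat_map o_def)
        also have "\<dots> = (\<Sum>i\<leftarrow>X. \<Sum>k\<leftarrow>X. tdelta (fst (M k i)) (snd (M k i)) z)"
          using NM by (intro arg_cong[where f=sum_list] map_cong refl) auto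
        also have "\<dots> = (\<Sum>k\<leftarrow>X. \<Sum>i\<leftarrow>X. tdelta (fst (M k i)) (snd (M k i)) z)"
          by (rule sum_list_swap)
        also have "\<dots> = tsum (concat (map (\<lambda>i. map (M i) X) X)) z"
          by (simp add: tsum_alt sum_list_concat_map o_def)
        finally show "tsum (concat (map (\<lambda>i. map (N i) X) X)) z = tsum (concat (map (\<lambda>i. map (M i) X) X)) z" .
      qed
      show ?thesis using A B C by (blast intro: T_trans T_sym)
    qed
    have "map (\<lambda>(z, w). (z * a, w)) e = concat (map (\<lambda>j. map (\<lambda>t. (yy t * a, sA (qq t (fst j)) (xx t * snd j))) X) pb)"
      unfolding e_def by (simp add: map_concat o_def)
    moreover have "map (\<lambda>(z, w). (z, a * w)) e = concat (map (\<lambda>j. map (\<lambda>t. (yy t, a * sA (qq t (fst j)) (xx t * snd j))) X) pb)"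
      unfolding e_def by (simp add: map_concat o_def)
    ultimately show ?thesis using per_j by (simp add: T_concat)
  qed
  show ?thesis unfolding strongly_separable_def using one inv by blast
qed


theorem proposition6p5:
  fixes sA :: "'k::comm_ring_1 \<Rightarrow> 'a::ring_1 \<Rightarrow> 'a"
    and sP :: "'k \<Rightarrow> 'p::ab_group_add \<Rightarrow> 'p"
    and sR :: "'k \<Rightarrow> 'r::ab_group_add \<Rightarrow> 'r"
    and \<beta> :: "'p \<Rightarrow> 'r \<Rightarrow> 'k"
    and \<psi> :: "'a \<Rightarrow> 'p"
    and xqy :: "('a \<times> ('p \<Rightarrow> 'k) \<times> 'a) list"
  assumes "algebra_over sA"
    and "invertible_witness sP sR \<beta>"
    and "P_Frobenius sA sP"
    and "frobenius_system sA sP \<psi> xqy"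
    and "morita_invertible sA (map (\<lambda>(x, q, y). (q, y * x)) xqy)"
  shows "strongly_separable sA"
proof -
  have alg: "Modules.module sA" "\<And>c a b. sA c (a * b) = sA c a * b" "\<And>c a b. sA c (a * b) = a * sA c b"
    using assms(1) unfolding algebra_over_def by blast+
  have fr: "\<forall>(x, q, y)\<in>set xqy. Modules.module_hom sP (*) q"
    "\<forall>a. (\<Sum>(x, q, y)\<leftarrow>xqy. sA (q (\<psi> (y * a))) x) = a"
    "\<forall>a. (\<Sum>(x, q, y)\<leftarrow>xqy. sA (q (\<psi> (a * x))) y) = a"
    using assms(4) unfolding frobenius_system_def by blast+
  have linq: "lin sP (fst (snd t))" if "t \<in> set xqy" for t
    using fr(1) that unfolding lin_def by (cases t) auto
  obtain pb :: "('p \<times> 'a) list" where pb: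
    "(\<Sum>(q, a)\<leftarrow>map (\<lambda>(x, q, y). (q, y * x)) xqy. \<Sum>(p, b)\<leftarrow>pb. sA (q p) (a * b)) = 1"
    using assms(5) unfolding morita_invertible_def by blast
  show ?thesis
  proof (rule main[where X=xqy and pb=pb and \<psi>=\<psi>])
    show "Modules.module sA" by (rule alg(1))
    show "\<And>c a b. sA c (a * b) = sA c a * b" by (rule alg(2))
    show "\<And>c a b. sA c (a * b) = a * sA c b" by (rule alg(3))
    show "fst (snd k) w * fst (snd i) p = fst (snd k) p * fst (snd i) w"
      if "i \<in> set xqy" "k \<in> set xqy" for i k w p
      by (rule inv_symm[OF assms(2) linq[OF that(2)] linq[OF that(1)]])
    show "(\<Sum>t\<leftarrow>xqy. sA (fst (snd t) (\<psi> (snd (snd t) * a))) (fst t)) = a" for a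
      using fr(2) by (simp add: case_prod_unfold)
    show "(\<Sum>t\<leftarrow>xqy. sA (fst (snd t) (\<psi> (a * fst t))) (snd (snd t))) = a" for a
      using fr(3) by (simp add: case_prod_unfold)
    show "(\<Sum>t\<leftarrow>xqy. \<Sum>j\<leftarrow>pb. sA (fst (snd t) (fst j)) ((snd (snd t) * fst t) * snd j)) = 1"
      using pb by (simp add: case_prod_unfold o_def)
  qed
qed

end
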